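(* Let $m,d',h,c$ be positive integers with $h\le d'$, and let $f:\{0,1\}^{L_{d'}}\to\{0,1\}$ be a function whose value is affected by only $m$ of its inputs. Let $f'=f\circ\Phi_{d'}\circ\Phi_{d'-1}\circ\cdots\circ\Phi_{d'-h+1}$ (with the random maps $\Phi_j$ independent). Then with probability at least $1-(m\theta^h)^c$, fewer than $c$ inputs affect the value of $f'$.
   Context: Fix $k\ge2$ and $0\le\theta<1$. $L_r$ is the set of depth-$r$ vertices of the complete $k$-ary tree, and $\mathrm{parent}(v)$ is the parent of $v$. $R_\theta$ is the distribution on $\{0,1,*\}$ giving $0$ and $1$ each probability $(1-\theta)/2$ and $*$ probability $\theta$. For $j\ge1$, $\Phi_j:\{0,1\}^{L_{j-1}}\to\{0,1\}^{L_j}$ is the random map defined by drawing $r\in\{0,1,*\}^{L_j}$ with i.i.d. $R_\theta$ coordinates and setting $(\Phi_j(x))_v=r_v$ if $r_v\in\{0,1\}$ and $(\Phi_j(x))_v=x_{\mathrm{parent}(v)}$ if $r_v=*$. An input affects a function if the function's value depends on it. *)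

theory Defs
  imports "HOL-Probability.Probability"
begin

text \<open>Vertices of the complete k-ary tree are lists over {0..<k}; the depth is the
length; the parent of a vertex removes its last entry.\<close>

definition L :: "nat \<Rightarrow> nat \<Rightarrow> nat list set" where
  "L k r = {v. length v = r \<and> set v \<subseteq> {..<k}}"

definition parent :: "nat list \<Rightarrow> nat list" where
  "parent v = butlast v"

text \<open>Elements of {0,1}^(L_r): boolean functions that are False outside L_r.\<close>

definition Lfun :: "nat \<Rightarrow> nat \<Rightarrow> (nat list \<Rightarrow> bool) set" where
  "Lfun k r = {x. \<forall>v. v \<notin> L k r \<longrightarrow> x v = False}"

definition affects :: "nat \<Rightarrow> nat \<Rightarrow> ((nat list \<Rightarrow> bool) \<Rightarrow> bool) \<Rightarrow> nat list \<Rightarrow> bool" where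
  "affects k r g v \<longleftrightarrow> v \<in> L k r \<and> (\<exists>x\<in>Lfun k r. g x \<noteq> g (x(v := \<not> x v)))"

datatype rval = R0 | R1 | Star

definition R :: "real \<Rightarrow> rval pmf" where
  "R \<theta> = bind_pmf (bernoulli_pmf \<theta>)
     (\<lambda>b. if b then return_pmf Star
          else map_pmf (\<lambda>c. if c then R1 else R0) (bernoulli_pmf (1/2)))"

definition Phi :: "nat \<Rightarrow> (nat \<times> nat list \<Rightarrow> rval) \<Rightarrow> nat \<Rightarrow> (nat list \<Rightarrow> bool) \<Rightarrow> (nat list \<Rightarrow> bool)" where
  "Phi k \<rho> j x = (\<lambda>v. if v \<in> L k j then
      (case \<rho> (j, v) of R0 \<Rightarrow> False | R1 \<Rightarrow> True | Star \<Rightarrow> x (parent v))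
    else False)"

text \<open>phis k rho j n = Phi_(j+n) o ... o Phi_(j+1).\<close>

fun phis :: "nat \<Rightarrow> (nat \<times> nat list \<Rightarrow> rval) \<Rightarrow> nat \<Rightarrow> nat \<Rightarrow> (nat list \<Rightarrow> bool) \<Rightarrow> (nat list \<Rightarrow> bool)" where
  "phis k \<rho> j 0 x = x"
| "phis k \<rho> j (Suc n) x = Phi k \<rho> (j + Suc n) (phis k \<rho> j n x)"

definition seed_pmf :: "nat \<Rightarrow> real \<Rightarrow> nat \<Rightarrow> nat \<Rightarrow> (nat \<times> nat list \<Rightarrow> rval) pmf" where
  "seed_pmf k \<theta> d' h =
     Pi_pmf {(j, v). d' - h < j \<and> j \<le> d' \<and> v \<in> L k j} Star (\<lambda>_. R \<theta>)"

end

theory Submission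
  imports Defs
begin

lemma phis_diff:
  "v \<in> L k (j + n) \<Longrightarrow> phis k \<rho> j n x v \<noteq> phis k \<rho> j n y v \<Longrightarrow>
   (\<forall>i. j < i \<and> i \<le> j + n \<longrightarrow> \<rho> (i, take i v) = Star) \<and> x (take j v) \<noteq> y (take j v)"
proof (induction n arbitrary: v)
  case 0
  then show ?case by (auto simp: L_def)
next
  case (Suc n)
  have len: "length v = j + Suc n" using Suc.prems(1) by (auto simp: L_def)
  have bl: "butlast v \<in> L k (j + n)" using Suc.prems(1)
    by (auto simp: L_def dest: in_set_butlastD)
  have st: "\<rho> (j + Suc n, v) = Star"
    using Suc.prems by (cases "\<rho> (j + Suc n, v)") (auto simp: Phi_def)
  have d: "phis k \<rho> j n x (butlast v) \<noteq> phis k \<rho> j n y (butlast v)"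
    using Suc.prems st by (auto simp: Phi_def parent_def)
  from Suc.IH[OF bl d] have IH:
    "\<forall>i. j < i \<and> i \<le> j + n \<longrightarrow> \<rho> (i, take i (butlast v)) = Star"
    "x (take j (butlast v)) \<noteq> y (take j (butlast v))" by auto
  have tb: "\<And>i. i \<le> j + n \<Longrightarrow> take i (butlast v) = take i v"
    using len by (simp add: take_butlast)
  show ?case
  proof (intro conjI allI impI)
    fix i assume i: "j < i \<and> i \<le> j + Suc n"
    show "\<rho> (i, take i v) = Star"
    proof (cases "i = j + Suc n")
      case True then show ?thesis using st len by simp
    next
      case False then show ?thesis using IH(1) i tb[of i] by auto
    qed
  next
    show "x (take j v) \<noteq> y (take j v)" using IH(2) tb[of j] by simp
  qed
qed

lemma phis_Lfun: "phis k \<rho> j (Suc n) x \<in> Lfun k (j + Suc n)"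
  by (auto simp: Lfun_def Phi_def)

lemma finite_L: "finite (L k r)"
proof -
  have "L k r = {xs. set xs \<subseteq> {..<k} \<and> length xs = r}" by (auto simp: L_def)
  then show ?thesis using finite_lists_length_eq[of "{..<k}" r] by simp
qed

lemma f_indep_aux:
  assumes "finite D"
  shows "\<forall>x. x \<in> Lfun k r \<and> y \<in> Lfun k r \<and> {v. x v \<noteq> y v} = D \<and> (\<forall>v\<in>D. \<not> affects k r f v)
     \<longrightarrow> f x = f y"
  using assms
proof (induction D rule: finite_induct)
  case empty
  then show ?case by (auto simp: fun_eq_iff)
next
  case (insert a D)
  show ?case
  proof (intro allI impI)
    fix x assume H: "x \<in> Lfun k r \<and> y \<in> Lfun k r \<and> {v. x v \<noteq> y v} = insert a D \<and>
       (\<forall>v\<in>insert a D. \<not> affects k r f v)"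
    have aL: "a \<in> L k r"
    proof (rule ccontr)
      assume "a \<notin> L k r"
      then have "x a = False" "y a = False" using H by (auto simp: Lfun_def)
      moreover have "x a \<noteq> y a" using H by auto
      ultimately show False by simp
    qed
    define x' where "x' = x(a := \<not> x a)"
    have x'L: "x' \<in> Lfun k r" using H aL by (auto simp: Lfun_def x'_def)
    have "{v. x' v \<noteq> y v} = D"
    proof -
      have "x a \<noteq> y a" using H by auto
      then show ?thesis using H insert.hyps(2) by (auto simp: x'_def)
    qed
    then have "f x' = f y" using insert.IH H x'L by auto
    moreover have "f x = f x'" using H aL unfolding affects_def x'_def by auto
    ultimately show "f x = f y" by simp
  qed
qed

lemma f_indep:
  assumes "x \<in> Lfun k r" "y \<in> Lfun k r" "\<forall>v. affects k r f v \<longrightarrow> x v = y v"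
  shows "f x = f y"
proof -
  have "{v. x v \<noteq> y v} \<subseteq> L k r" using assms by (auto simp: Lfun_def)
  then have "finite {v. x v \<noteq> y v}" using finite_L finite_subset by blast
  then show ?thesis using f_indep_aux[of "{v. x v \<noteq> y v}" k r y f] assms by auto
qed

lemma pmf_R_Star: "0 \<le> \<theta> \<Longrightarrow> \<theta> \<le> 1 \<Longrightarrow> pmf (R \<theta>) Star = \<theta>"
  by (simp add: R_def pmf_bind pmf_map vimage_def)

lemma prob_F:
  fixes I J :: "(nat \<times> nat list) set"
  assumes "finite I" "J \<subseteq> I" "0 \<le> \<theta>" "\<theta> \<le> 1"
  shows "measure_pmf.prob (Pi_pmf I Star (\<lambda>_. R \<theta>)) {\<rho>. \<forall>i\<in>J. \<rho> i = Star} = \<theta> ^ card J"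
proof -
  define B where "B = (\<lambda>i. if i \<in> J then {Star} else UNIV)"
  have "{\<rho>. \<forall>i\<in>J. \<rho> i = Star} = Pi I B" using assms(2) by (auto simp: B_def Pi_def)
  then have "measure_pmf.prob (Pi_pmf I Star (\<lambda>_. R \<theta>)) {\<rho>. \<forall>i\<in>J. \<rho> i = Star}
      = (\<Prod>i\<in>I. measure_pmf.prob (R \<theta>) (B i))"
    using measure_Pi_pmf_Pi[OF assms(1)] by simp
  also have "\<dots> = (\<Prod>i\<in>I. if i \<in> J then \<theta> else 1)"
    by (intro prod.cong) (auto simp: B_def measure_pmf_single pmf_R_Star assms)
  also have "\<dots> = \<theta> ^ card J"
    using assms(1,2) by (simp add: prod.If_cases Int_absorb1)
  finally show ?thesis .
qed

theorem mainTheorem14: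
  fixes k m d' h c :: nat and \<theta> :: real and f :: "(nat list \<Rightarrow> bool) \<Rightarrow> bool"
  assumes "k \<ge> 2" and "0 \<le> \<theta>" and "\<theta> < 1"
    and "m > 0" and "d' > 0" and "h > 0" and "c > 0" and "h \<le> d'"
    and "card {v. affects k d' f v} \<le> m"
  shows "measure_pmf.prob (seed_pmf k \<theta> d' h)
           {\<rho>. card {v. affects k (d' - h) (\<lambda>x. f (phis k \<rho> (d' - h) h x)) v} < c}
         \<ge> 1 - (real m * \<theta> ^ h) ^ c"
proof -
  define j0 where "j0 = d' - h"
  have dj: "d' = j0 + h" using assms(8) by (simp add: j0_def)
  obtain h' where hh: "h = Suc h'" using assms(6) by (cases h) auto
  define S where "S = {v. affects k d' f v}"
  have SL: "S \<subseteq> L k d'" by (auto simp: S_def affects_def)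
  have finS: "finite S" using SL finite_L finite_subset by blast
  define A where "A = (\<lambda>\<rho>. {v\<in>S. \<forall>i. j0 < i \<and> i \<le> d' \<longrightarrow> \<rho> (i, take i v) = Star})"
  define F where "F = (\<lambda>T::nat list set. {\<rho>::nat \<times> nat list \<Rightarrow> rval. \<forall>v\<in>T. \<forall>i. j0 < i \<and> i \<le> d' \<longrightarrow> \<rho> (i, take i v) = Star})"
  define TT where "TT = {T. T \<subseteq> S \<and> card T = c \<and> inj_on (take j0) T}"
  define I where "I = {(j, v). d' - h < j \<and> j \<le> d' \<and> v \<in> L k j}"
  define p where "p = seed_pmf k \<theta> d' h"
  have p_def': "p = Pi_pmf I Star (\<lambda>_. R \<theta>)" by (simp add: p_def seed_pmf_def I_def)
  have finI: "finite I"
  proof -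
    have "I \<subseteq> {..d'} \<times> (\<Union>j\<le>d'. L k j)" by (auto simp: I_def)
    moreover have "finite ({..d'} \<times> (\<Union>j\<le>d'. L k j))" using finite_L by auto
    ultimately show ?thesis using finite_subset by blast
  qed
  have step1: "{u. affects k j0 (\<lambda>x. f (phis k \<rho> j0 h x)) u} \<subseteq> take j0 ` A \<rho>" for \<rho>
  proof
    fix u assume "u \<in> {u. affects k j0 (\<lambda>x. f (phis k \<rho> j0 h x)) u}"
    then obtain x where uL: "u \<in> L k j0" and xL: "x \<in> Lfun k j0"
      and ne: "f (phis k \<rho> j0 h x) \<noteq> f (phis k \<rho> j0 h (x(u := \<not> x u)))"
      by (auto simp: affects_def)
    have l1: "phis k \<rho> j0 h x \<in> Lfun k d'" "phis k \<rho> j0 h (x(u := \<not> x u)) \<in> Lfun k d'"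
      using phis_Lfun[of k \<rho> j0 h'] by (auto simp: hh dj)
    obtain v where va: "affects k d' f v"
      and vd: "phis k \<rho> j0 h x v \<noteq> phis k \<rho> j0 h (x(u := \<not> x u)) v"
      using f_indep[OF l1, of f] ne by blast
    have vL: "v \<in> L k (j0 + h)" using va dj by (auto simp: affects_def)
    from phis_diff[OF vL vd] have
      "\<forall>i. j0 < i \<and> i \<le> j0 + h \<longrightarrow> \<rho> (i, take i v) = Star"
      "x (take j0 v) \<noteq> (x(u := \<not> x u)) (take j0 v)" by auto
    then have "v \<in> A \<rho>" "take j0 v = u" using va dj
      by (auto simp: A_def S_def split: if_splits)
    then show "u \<in> take j0 ` A \<rho>" by blast
  qed
  have step2: "{\<rho>. \<not> card {v. affects k j0 (\<lambda>x. f (phis k \<rho> j0 h x)) v} < c} \<subseteq> (\<Union>T\<in>TT. F T)"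
  proof
    fix \<rho> assume "\<rho> \<in> {\<rho>. \<not> card {v. affects k j0 (\<lambda>x. f (phis k \<rho> j0 h x)) v} < c}"
    then have cge: "c \<le> card {v. affects k j0 (\<lambda>x. f (phis k \<rho> j0 h x)) v}" by simp
    have finA: "finite (A \<rho>)" using finS by (auto simp: A_def)
    have "c \<le> card (take j0 ` A \<rho>)"
      using cge card_mono[OF finite_imageI[OF finA] step1[of \<rho>]] by linarith
    then obtain T' where T': "T' \<subseteq> take j0 ` A \<rho>" "card T' = c"
      using obtain_subset_with_card_n by metis
    define T where "T = inv_into (A \<rho>) (take j0) ` T'"
    have injinv: "inj_on (inv_into (A \<rho>) (take j0)) T'"
      using inj_on_inv_into[OF T'(1)] .
    have TA: "T \<subseteq> A \<rho>" using T'(1) by (auto simp: T_def intro: inv_into_into)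
    have cT: "card T = c" using card_image[OF injinv] T'(2) by (simp add: T_def)
    have injT: "inj_on (take j0) T"
    proof -
      have "x = y" if "x \<in> T'" "y \<in> T'"
        "take j0 (inv_into (A \<rho>) (take j0) x) = take j0 (inv_into (A \<rho>) (take j0) y)" for x y
        using that T'(1) f_inv_into_f[of x "take j0" "A \<rho>"] f_inv_into_f[of y "take j0" "A \<rho>"]
        by auto
      then show ?thesis unfolding T_def inj_on_def by auto
    qed
    have "T \<in> TT" using TA cT injT by (auto simp: TT_def A_def)
    moreover have "\<rho> \<in> F T" using TA by (auto simp: F_def A_def)
    ultimately show "\<rho> \<in> (\<Union>T\<in>TT. F T)" by blast
  qed
  have finTT: "finite TT"
  proof -
    have "TT \<subseteq> Pow S" by (auto simp: TT_def)
    then show ?thesis using finS finite_subset by blast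
  qed
  have probF: "measure_pmf.prob p (F T) = \<theta> ^ (c * h)" if "T \<in> TT" for T
  proof -
    define J where "J = (\<lambda>(v, i). (i, take i v)) ` (T \<times> {j0<..d'})"
    have TS: "T \<subseteq> S" "card T = c" "inj_on (take j0) T" using that by (auto simp: TT_def)
    have "inj_on (\<lambda>(v, i). (i, take i v)) (T \<times> {j0<..d'})"
    proof (rule inj_onI, clarsimp)
      fix v i w
      assume "v \<in> T" "w \<in> T" "j0 < i" "take i v = take i w"
      then have "take j0 (take i v) = take j0 (take i w)" by simp
      then have "take j0 v = take j0 w" using \<open>j0 < i\<close> by (simp add: min_def)
      then show "v = w" using TS(3) \<open>v \<in> T\<close> \<open>w \<in> T\<close> by (auto dest: inj_onD)
    qed
    then have cJ: "card J = c * h"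
      unfolding J_def using TS(2) dj by (simp add: card_image card_cartesian_product)
    have JI: "J \<subseteq> I"
    proof
      fix z assume "z \<in> J"
      then obtain v i where z: "z = (i, take i v)" "v \<in> T" "j0 < i" "i \<le> d'"
        by (auto simp: J_def)
      have "v \<in> L k d'" using z(2) TS(1) SL by auto
      then have "take i v \<in> L k i" using z(4) by (auto simp: L_def dest: in_set_takeD)
      then show "z \<in> I" using z by (auto simp: I_def j0_def)
    qed
    have "F T = {\<rho>. \<forall>i\<in>J. \<rho> i = Star}" by (auto simp: F_def J_def)
    then show ?thesis using prob_F[OF finI JI assms(2)] assms(3) cJ by (simp add: p_def')
  qed
  have "measure_pmf.prob p {\<rho>. \<not> card {v. affects k j0 (\<lambda>x. f (phis k \<rho> j0 h x)) v} < c}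
       \<le> measure_pmf.prob p (\<Union>T\<in>TT. F T)"
    using step2 by (intro measure_pmf.finite_measure_mono) auto
  also have "\<dots> \<le> (\<Sum>T\<in>TT. measure_pmf.prob p (F T))"
    using finTT by (intro measure_pmf.finite_measure_subadditive_finite) auto
  also have "\<dots> = real (card TT) * \<theta> ^ (c * h)" using probF by simp
  also have "\<dots> \<le> real m ^ c * \<theta> ^ (c * h)"
  proof (intro mult_right_mono)
    have "card TT \<le> card {B. B \<subseteq> S \<and> card B = c}"
      by (intro card_mono) (auto simp: TT_def finS)
    also have "\<dots> = card S choose c" using n_subsets[OF finS] .
    also have "\<dots> \<le> m ^ c"
    proof (cases "c \<le> card S")
      case True
      then have "card S choose c \<le> card S ^ c" by (rule binomial_le_pow)
      also have "\<dots> \<le> m ^ c" using assms(9) by (simp add: S_def power_mono)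
      finally show ?thesis .
    next
      case False then show ?thesis by (simp add: binomial_eq_0)
    qed
    finally show "real (card TT) \<le> real m ^ c" by (simp add: of_nat_le_iff[symmetric])
  qed (use assms(2) in simp)
  also have "\<dots> = (real m * \<theta> ^ h) ^ c" by (simp add: power_mult_distrib flip: power_mult) (simp add: mult.commute)
  finally have bad: "measure_pmf.prob p {\<rho>. \<not> card {v. affects k j0 (\<lambda>x. f (phis k \<rho> j0 h x)) v} < c}
       \<le> (real m * \<theta> ^ h) ^ c" .
  have "measure_pmf.prob p {\<rho>. card {v. affects k j0 (\<lambda>x. f (phis k \<rho> j0 h x)) v} < c}
      = 1 - measure_pmf.prob p {\<rho>. \<not> card {v. affects k j0 (\<lambda>x. f (phis k \<rho> j0 h x)) v} < c}"
    using measure_pmf.prob_compl[of "{\<rho>. card {v. affects k j0 (\<lambda>x. f (phis k \<rho> j0 h x)) v} < c}" p]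
    by (simp add: Compl_eq_Diff_UNIV[symmetric] Collect_neg_eq)
  then show ?thesis using bad by (simp add: p_def j0_def)
qed

end
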